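(* Let $n\ge2$, $\mathbf{q}\in\mathbb{R}^n$ and $1/n<t<1$. Then there exists a maximizer $\mathbf{p}^*$ of $\mathbf{p}\cdot\mathbf{q}$ over $P(t)$ with $\mathbf{p}^*\cdot\mathbf{p}^*=t$. Consequently, $\max_{\mathbf{p}\in P(t)}\mathbf{p}\cdot\mathbf{q}=\max\{\mathbf{p}\cdot\mathbf{q}:\mathbf{p}\ge0,\ \sum_i\mathbf{p}_i=1,\ \mathbf{p}\cdot\mathbf{p}=t\}$.
   Context: $P(t)=\{\mathbf{p}\in\mathbb{R}^n:\mathbf{p}\ge0,\ \sum_i\mathbf{p}_i=1,\ \mathbf{p}\cdot\mathbf{p}\le t\}$. *)

theory Defs
  imports "HOL-Analysis.Analysis"
begin

definition Pset :: "real \<Rightarrow> (real ^ 'n) set" where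
  "Pset t = {p. (\<forall>i. p $ i \<ge> 0) \<and> (\<Sum>i\<in>UNIV. p $ i) = 1 \<and> p \<bullet> p \<le> t}"

definition Sset :: "real \<Rightarrow> (real ^ 'n) set" where
  "Sset t = {p. (\<forall>i. p $ i \<ge> 0) \<and> (\<Sum>i\<in>UNIV. p $ i) = 1 \<and> p \<bullet> p = t}"

end

theory Submission
  imports Defs
begin

lemma Pset_compact: "compact (Pset t :: (real ^ 'n) set)"
proof -
  have cl: "closed (Pset t :: (real ^ 'n) set)"
    unfolding Pset_def
    by (intro closed_Collect_conj closed_Collect_all closed_Collect_le closed_Collect_eq
        continuous_intros)
  have "Pset t \<subseteq> cball (0::real^'n) (sqrt t)"
  proof
    fix p :: "real^'n" assume "p \<in> Pset t"
    then have "p \<bullet> p \<le> t" by (simp add: Pset_def)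
    then have "norm p \<le> sqrt t"
      by (metis norm_eq_sqrt_inner real_sqrt_le_mono)
    then show "p \<in> cball 0 (sqrt t)" by simp
  qed
  then have "bounded (Pset t :: (real ^ 'n) set)" using bounded_cball bounded_subset by blast
  with cl show ?thesis using bounded_closed_imp_seq_compact seq_compact_eq_compact by blast
qed

theorem lemma6:
  fixes q :: "real ^ 'n" and t :: real
  assumes "CARD('n) \<ge> 2"
    and "1 / real CARD('n) < t" and "t < 1"
  shows "(\<exists>ps \<in> Pset t. (\<forall>p \<in> Pset t. p \<bullet> q \<le> ps \<bullet> q) \<and> ps \<bullet> ps = t)
         \<and> (\<exists>m. m \<in> (\<lambda>p. p \<bullet> q) ` (Pset t) \<and> m \<in> (\<lambda>p. p \<bullet> q) ` (Sset t)
                \<and> (\<forall>p \<in> Pset t. p \<bullet> q \<le> m) \<and> (\<forall>p \<in> Sset t. p \<bullet> q \<le> m)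
                \<and> (SUP p \<in> Pset t. p \<bullet> q) = m \<and> (SUP p \<in> Sset t. p \<bullet> q) = m)"
proof -
  define N where "N = real CARD('n)"
  have Npos: "N > 0" unfolding N_def by simp
  define u :: "real^'n" where "u = (\<chi> i. 1 / N)"
  have uu: "u \<bullet> u = 1 / N"
    unfolding u_def inner_vec_def N_def by (simp add: power2_eq_square)
  have un: "\<forall>i. u $ i \<ge> 0" using Npos by (simp add: u_def)
  have us: "(\<Sum>i\<in>UNIV. u $ i) = 1" using Npos by (simp add: u_def N_def)
  have ut: "u \<bullet> u \<le> t" using assms(2) uu by (simp add: N_def)
  have uP: "u \<in> Pset t" unfolding Pset_def mem_Collect_eq using un us ut by (intro conjI)
  have ne: "(Pset t :: (real^'n) set) \<noteq> {}" using uP by auto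
  have cq: "continuous_on (Pset t) (\<lambda>p. p \<bullet> q)" by (intro continuous_intros)
  obtain p0 where p0: "p0 \<in> Pset t" and p0max: "\<forall>p \<in> Pset t. p \<bullet> q \<le> p0 \<bullet> q"
    using continuous_attains_sup[OF Pset_compact ne cq] by blast
  obtain k where k: "\<And>i. q $ i \<le> q $ k"
  proof -
    have "Max (range (\<lambda>i. q $ i)) \<in> range (\<lambda>i. q $ i)" by (intro Max_in) auto
    then obtain k where "Max (range (\<lambda>i. q $ i)) = q $ k" by (metis imageE)
    moreover have "\<And>i. q $ i \<le> Max (range (\<lambda>i. q $ i))" by (intro Max_ge) auto
    ultimately have "\<And>i. q $ i \<le> q $ k" by simp
    then show ?thesis using that by blast
  qed
  define e :: "real^'n" where "e = axis k 1"
  have p0nn: "\<And>i. p0 $ i \<ge> 0" and p0s: "(\<Sum>i\<in>UNIV. p0 $ i) = 1" and p0t: "p0 \<bullet> p0 \<le> t"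
    using p0 by (auto simp: Pset_def)
  have e_nn: "\<And>i. e $ i \<ge> 0" by (simp add: e_def axis_def)
  have e_s: "(\<Sum>i\<in>UNIV. e $ i) = 1" by (simp add: e_def axis_def)
  have e_ee: "e \<bullet> e = 1" by (simp add: e_def)
  have "p0 \<bullet> q = (\<Sum>i\<in>UNIV. p0 $ i * q $ i)" by (simp add: inner_vec_def)
  also have "\<dots> \<le> (\<Sum>i\<in>UNIV. p0 $ i * q $ k)"
    by (intro sum_mono mult_left_mono k p0nn)
  also have "\<dots> = q $ k" using p0s by (simp add: sum_distrib_right[symmetric])
  also have "q $ k = e \<bullet> q" by (simp add: e_def inner_axis')
  finally have eq: "p0 \<bullet> q \<le> e \<bullet> q" .
  define f where "f = (\<lambda>s::real. ((1 - s) *\<^sub>R p0 + s *\<^sub>R e) \<bullet> ((1 - s) *\<^sub>R p0 + s *\<^sub>R e))"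
  have "continuous_on {0..1} f" unfolding f_def by (intro continuous_intros)
  moreover have "f 0 \<le> t" using p0t by (simp add: f_def)
  moreover have "t \<le> f 1" using e_ee assms(3) by (simp add: f_def)
  ultimately obtain s where s: "0 \<le> s" "s \<le> 1" "f s = t"
    using IVT'[of f 0 t 1] by auto
  define ps where "ps = (1 - s) *\<^sub>R p0 + s *\<^sub>R e"
  have psnn: "\<And>i. ps $ i \<ge> 0" unfolding ps_def using s p0nn e_nn by simp
  have "(\<Sum>i\<in>UNIV. ps $ i) = (1 - s) * (\<Sum>i\<in>UNIV. p0 $ i) + s * (\<Sum>i\<in>UNIV. e $ i)"
    unfolding ps_def by (simp add: sum.distrib sum_distrib_left)
  then have pss: "(\<Sum>i\<in>UNIV. ps $ i) = 1" using p0s e_s by simp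
  have pst: "ps \<bullet> ps = t" using s unfolding ps_def f_def by simp
  have psP: "ps \<in> Pset t" using psnn pss pst by (simp add: Pset_def)
  have psS: "ps \<in> Sset t" using psnn pss pst by (simp add: Sset_def)
  have "ps \<bullet> q = (1 - s) * (p0 \<bullet> q) + s * (e \<bullet> q)"
    unfolding ps_def by (simp add: inner_add_left)
  also have "\<dots> \<ge> (1 - s) * (p0 \<bullet> q) + s * (p0 \<bullet> q)"
    using eq s by (intro add_left_mono mult_left_mono) auto
  finally have psq: "p0 \<bullet> q \<le> ps \<bullet> q" by (simp add: algebra_simps)
  have psmax: "\<forall>p \<in> Pset t. p \<bullet> q \<le> ps \<bullet> q" using p0max psq by fastforce
  have SP: "Sset t \<subseteq> Pset t" by (auto simp: Sset_def Pset_def)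
  have psmaxS: "\<forall>p \<in> Sset t. p \<bullet> q \<le> ps \<bullet> q" using psmax SP by blast
  have sup1: "(SUP p \<in> Pset t. p \<bullet> q) = ps \<bullet> q"
    by (rule cSup_eq_maximum) (use psP psmax in auto)
  have sup2: "(SUP p \<in> Sset t. p \<bullet> q) = ps \<bullet> q"
    by (rule cSup_eq_maximum) (use psS psmaxS in auto)
  show ?thesis
  proof (intro conjI exI bexI)
    show "ps \<bullet> q \<in> (\<lambda>p. p \<bullet> q) ` Pset t" using psP by (rule imageI)
    show "ps \<bullet> q \<in> (\<lambda>p. p \<bullet> q) ` Sset t" using psS by (rule imageI)
  qed (fact psP psmax psmaxS pst sup1 sup2)+
qed

end
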